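(* Let $q>1$, let $k$ be a positive integer and $0\le r<k$ an integer. For $s\in\mathbb C$ arbitrary when $|z|<1$, or $\Re(s)>k$ when $|z|=1$ (the variable of integration $a$ ranging over $a\in\mathbb C\setminus\mathbb Z_0^-$), $$\int_0^1\Phi_{k-r}\bigl(z,s,a+(k-r)\bigr)\,d_qa=z^{-(k-r)}\sum_{l=0}^\infty\binom{-s}{l}\frac{\mathrm{Li}_{k-r}(z,s+l)}{[l+1]_q}.$$
   Context: $\mathbb Z_0^-=\{0,-1,-2,\ldots\}$. For $q>1$, the Jackson integral is $\int_0^1 f(a)\,d_qa=(q-1)\sum_{n=1}^\infty f(q^{-n})q^{-n}$, and $[x]_q=\frac{q^{x}-1}{q-1}$. The multiple Hurwitz-Lerch zeta function is $\Phi_j(z,s,a)=\sum_{m_1,\ldots,m_j=0}^\infty\frac{z^{m_1+\dots+m_j}}{(m_1+\dots+m_j+a)^{s}}$, and the multiple Lipschitz-Lerch zeta function is $\mathrm{Li}_j(z,s)=\sum_{m_1,\ldots,m_j=1}^\infty\frac{z^{m_1+\dots+m_j}}{(m_1+\dots+m_j)^{s}}$, both with $s\in\mathbb C$ when $|z|<1$ and $\Re(s)>j$ when $|z|=1$. $\binom{-s}{l}=\frac{(-s)(-s-1)\cdots(-s-l+1)}{l!}$. *)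

theory Defs
  imports "HOL-Analysis.Analysis"
begin

definition jackson_int :: "real \<Rightarrow> (real \<Rightarrow> complex) \<Rightarrow> complex" where
  "jackson_int q f =
     complex_of_real (q - 1) *
     (\<Sum>n. f (q powr (- real (Suc n))) * complex_of_real (q powr (- real (Suc n))))"

definition q_num :: "real \<Rightarrow> real \<Rightarrow> real" where
  "q_num q x = (q powr x - 1) / (q - 1)"

definition mult_HL_zeta :: "nat \<Rightarrow> complex \<Rightarrow> complex \<Rightarrow> complex \<Rightarrow> complex" where
  "mult_HL_zeta j z s a =
     infsum (\<lambda>m. z ^ (sum m {..<j}) / (of_nat (sum m {..<j}) + a) powr s)
            (PiE {..<j} (\<lambda>_. UNIV))"

definition mult_LL_zeta :: "nat \<Rightarrow> complex \<Rightarrow> complex \<Rightarrow> complex" where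
  "mult_LL_zeta j z s =
     infsum (\<lambda>m. z ^ (sum m {..<j}) / (of_nat (sum m {..<j})) powr s)
            (PiE {..<j} (\<lambda>_. {1..}))"

end

theory Submission imports Defs "HOL-Real_Asymp.Real_Asymp" begin


lemma geo_powr_summable:
  fixes w t :: real assumes "0 \<le> w" "w < 1"
  shows "summable (\<lambda>m. w ^ m * real m powr t)"
proof (cases "w = 0")
  case True
  have "(\<lambda>m. w ^ m * real m powr t) = (\<lambda>_. 0)"
    using True by (auto simp: fun_eq_iff power_0_left)
  then show ?thesis by simp
next
  case False
  hence w: "0 < w" using assms by simp
  define c where "c = (1 + w) / 2"
  have c1: "c < 1" and wc: "w < c" using assms by (auto simp: c_def)
  have lim: "((\<lambda>n. ((real n+1)/real n) powr t) \<longlongrightarrow> 1) sequentially"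
    by real_asymp
  have "1 < c / w" using wc w by simp
  from order_tendstoD(2)[OF lim this] obtain N where N: "\<And>n. n \<ge> N \<Longrightarrow> ((real n+1)/real n) powr t < c / w"
    unfolding eventually_sequentially by blast
  show ?thesis
  proof (rule summable_ratio_test[OF c1, of "Suc N"])
    fix n assume n: "Suc N \<le> n"
    hence npos: "real n > 0" by simp
    have "((real n+1)/real n) powr t = (real n + 1) powr t / real n powr t"
      using npos by (simp add: powr_divide)
    with N[of n] n have "(real n + 1) powr t / real n powr t < c / w" by simp
    hence "(real n + 1) powr t < c / w * real n powr t"
      using npos by (simp add: divide_less_eq)
    hence "w * (real n + 1) powr t \<le> c * real n powr t"
      using w by (simp add: field_simps)
    hence "w ^ n * (w * (real n + 1) powr t) \<le> w ^ n * (c * real n powr t)"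
      using w by (intro mult_left_mono) auto
    thus "norm (w ^ Suc n * real (Suc n) powr t) \<le> c * norm (w ^ n * real n powr t)"
      using w by (simp add: abs_mult add.commute mult_ac)
  qed
qed

lemma binom_abs_summable:
  fixes s :: complex and x :: real
  assumes "0 \<le> x" "x < 1"
  shows "summable (\<lambda>l. norm ((-s) gchoose l) * x ^ l)"
proof -
  define y where "y = (1 + x) / 2"
  have y: "x < y" "y < 1" using assms by (auto simp: y_def)
  have "summable (\<lambda>l. ((-s) gchoose l) * complex_of_real y ^ l)"
    using gen_binomial_complex[of "complex_of_real y" "-s"] y assms
    by (auto simp: sums_iff)
  from powser_insidea[OF this, of "complex_of_real x"]
  have "summable (\<lambda>l. norm (((-s) gchoose l) * complex_of_real x ^ l))"
    using y assms by simp
  thus ?thesis using assms by (simp add: norm_mult norm_power)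
qed

lemma prod_summable:
  fixes f :: "'a \<Rightarrow> real" and g :: "'b \<Rightarrow> real"
  assumes "f summable_on A" "g summable_on B" "\<And>x. x\<in>A \<Longrightarrow> f x \<ge> 0" "\<And>y. y\<in>B \<Longrightarrow> g y \<ge> 0"
  shows "(\<lambda>(x,y). f x * g y) summable_on A \<times> B"
proof (rule summable_on_SigmaI[where g = "\<lambda>x. f x * infsum g B"])
  fix x assume "x \<in> A"
  show "((\<lambda>y. case (x, y) of (x, y) \<Rightarrow> f x * g y) has_sum f x * infsum g B) B"
    using has_sum_cmult_right[OF has_sum_infsum[OF assms(2)]] by simp
next
  show "(\<lambda>x. f x * infsum g B) summable_on A"
    using summable_on_cmult_left[OF assms(1)] by simp
next
  fix x y assume "x \<in> A" "y \<in> B"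
  thus "0 \<le> (case (x, y) of (x, y) \<Rightarrow> f x * g y)" using assms by simp
qed

lemma powr_pow_helper:
  fixes x a :: real assumes "x > 0" "j > 0"
  shows "(x powr (a / real j)) ^ j = x powr a"
proof -
  have "(x powr (a / real j)) ^ j = (x powr (a / real j)) powr real j"
    using assms by (simp add: powr_realpow)
  also have "\<dots> = x powr a" using assms by (simp add: powr_powr)
  finally show ?thesis .
qed

lemma Li_summable:
  fixes z :: complex and \<sigma> :: real and j :: nat
  assumes j: "0 < j" and zc: "norm z < 1 \<or> (norm z = 1 \<and> \<sigma> > real j)"
  shows "(\<lambda>n. norm z ^ sum n {..<j} * real (sum n {..<j}) powr (- \<sigma>)) summable_on PiE {..<j} (\<lambda>_. {1::nat..})"
proof -
  note of_nat_sum[simp del]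
  define T where "T = PiE {..<j} (\<lambda>_. {1::nat..})"
  have pos: "n i \<ge> 1" if "n \<in> T" "i < j" for n i using that by (auto simp: T_def)
  have snpos: "sum n {..<j} \<ge> 1" if "n \<in> T" for n
  proof -
    have "n 0 \<le> sum n {..<j}" using j by (intro member_le_sum) auto
    thus ?thesis using pos[OF that, of 0] j by simp
  qed
  have ile: "n i \<le> sum n {..<j}" if "i < j" for n :: "nat \<Rightarrow> nat" and i using that by (intro member_le_sum) auto
  obtain t C where C0: "C \<ge> 0" and gs: "summable (\<lambda>m. norm z ^ m * real m powr t)"
    and bound: "\<And>n. n \<in> T \<Longrightarrow> real (sum n {..<j}) powr (-\<sigma>) \<le> C * (\<Prod>i<j. real (n i) powr t)"
  proof (cases "norm z < 1")
    case True
    define t where "t = max (-\<sigma>) 0"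
    show ?thesis
    proof (rule that[of "real j powr t" t])
      show "summable (\<lambda>m. norm z ^ m * real m powr t)" using True by (intro geo_powr_summable) auto
    next
      fix n assume n: "n \<in> T"
      have prodpos: "(\<Prod>i<j. n i) \<ge> 1" using pos[OF n] by (intro prod_ge_1) auto
      show "real (sum n {..<j}) powr (-\<sigma>) \<le> real j powr t * (\<Prod>i<j. real (n i) powr t)"
      proof (cases "\<sigma> \<ge> 0")
        case True
        hence t0: "t = 0" by (simp add: t_def)
        have "real (sum n {..<j}) powr (-\<sigma>) \<le> real (sum n {..<j}) powr 0"
          using snpos[OF n] True by (intro powr_mono) auto
        also have "\<dots> = 1"
        proof -
          have "real (sum n {..<j}) \<ge> 1" using snpos[OF n] by (metis of_nat_1 of_nat_le_iff)
          moreover have "\<And>x::real. x \<ge> 1 \<Longrightarrow> x powr 0 = 1" by simp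
          ultimately show ?thesis by blast
        qed
        also have "\<dots> = real j powr t * (\<Prod>i<j. real (n i) powr t)"
          using t0 j pos[OF n] by (auto intro!: prod.neutral simp: Suc_le_eq)
        finally show ?thesis .
      next
        case False
        hence t: "t = -\<sigma>" "t > 0" by (auto simp: t_def)
        have "sum n {..<j} \<le> sum (\<lambda>_. \<Prod>i<j. n i) {..<j}"
        proof (intro sum_mono)
          fix i assume "i \<in> {..<j}"
          hence "n i dvd (\<Prod>i<j. n i)" by (intro dvd_prodI) auto
          then show "n i \<le> (\<Prod>i<j. n i)" by (rule dvd_imp_le) (use prodpos in linarith)
        qed
        hence "real (sum n {..<j}) \<le> real (sum (\<lambda>_. \<Prod>i<j. n i) {..<j})"
          by (simp only: of_nat_le_iff)
        also have "\<dots> = real j * (\<Prod>i<j. real (n i))" by (simp add: of_nat_prod)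
        finally have "real (sum n {..<j}) \<le> real j * (\<Prod>i<j. real (n i))" .
        hence "real (sum n {..<j}) powr t \<le> (real j * (\<Prod>i<j. real (n i))) powr t"
          using t snpos[OF n] by (intro powr_mono2) auto
        also have "\<dots> = real j powr t * (\<Prod>i<j. real (n i) powr t)"
          by (simp add: powr_mult prod_powr_distrib prod_nonneg)
        finally show ?thesis using t by simp
      qed
    qed (simp)
  next
    case False
    with zc have z1: "norm z = 1" and sj: "\<sigma> > real j" by auto
    define t where "t = -\<sigma> / real j"
    show ?thesis
    proof (rule that[of 1 t])
      have "t < -1" using sj j by (simp add: t_def field_simps)
      hence "summable (\<lambda>m. real m powr t)" by (simp add: summable_real_powr_iff)
      thus "summable (\<lambda>m. norm z ^ m * real m powr t)" using z1 by simp
    next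
      fix n assume n: "n \<in> T"
      have tle: "t \<le> 0" using sj j by (simp add: t_def field_simps)
      have xp: "real (sum n {..<j}) > 0" using snpos[OF n] by (metis of_nat_0_less_iff less_le_trans zero_less_one)
      have "real (sum n {..<j}) powr (-\<sigma>) = (real (sum n {..<j}) powr t) ^ j"
        using powr_pow_helper[OF xp j, of "-\<sigma>"] unfolding t_def by simp
      also have "\<dots> = (\<Prod>i<j. real (sum n {..<j}) powr t)" by simp
      also have "\<dots> \<le> (\<Prod>i<j. real (n i) powr t)"
        using pos[OF n] ile tle by (intro prod_mono conjI powr_mono2') (auto simp: Suc_le_eq)
      finally show "real (sum n {..<j}) powr (-\<sigma>) \<le> 1 * (\<Prod>i<j. real (n i) powr t)" by simp
    qed simp
  qed
  define g where "g m = norm z ^ m * real m powr t" for m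
  have g0: "g m \<ge> 0" for m by (simp add: g_def)
  have "Infinite_Set_Sum.abs_summable_on (\<lambda>n. \<Prod>i\<in>{..<j}. g (n i)) T"
    unfolding T_def
  proof (rule abs_summable_on_prod_PiE)
    fix i assume "i \<in> {..<j}"
    have "(\<lambda>m. if m \<in> {1::nat..} then norm (g m) else 0) = g"
      by (auto simp: fun_eq_iff g_def g0)
    thus "Infinite_Set_Sum.abs_summable_on g {1..}"
    proof -
      have "summable g" using gs unfolding g_def[abs_def] .
      with \<open>(\<lambda>m. if m \<in> {1::nat..} then norm (g m) else 0) = g\<close> show ?thesis
        by (subst abs_summable_on_nat_iff) simp
    qed
  qed auto
  hence "(\<lambda>n. norm (\<Prod>i\<in>{..<j}. g (n i))) summable_on T"
    by (rule abs_summable_equivalent[THEN iffD2])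
  hence "(\<lambda>n. C * (\<Prod>i\<in>{..<j}. g (n i))) summable_on T"
    by (intro summable_on_cmult_right) (simp add: g0 prod_nonneg abs_prod)
  thus ?thesis unfolding T_def[symmetric]
  proof (rule summable_on_comparison_test)
    fix n assume n: "n \<in> T"
    have "norm z ^ sum n {..<j} * real (sum n {..<j}) powr (- \<sigma>)
       \<le> (\<Prod>i<j. norm z ^ n i) * (C * (\<Prod>i<j. real (n i) powr t))"
      by (simp add: power_sum[symmetric] bound[OF n] mult_left_mono)
    also have "\<dots> = C * (\<Prod>i\<in>{..<j}. g (n i))"
      by (simp add: g_def prod.distrib)
    finally show "norm z ^ sum n {..<j} * real (sum n {..<j}) powr (- \<sigma>) \<le> C * (\<Prod>i\<in>{..<j}. g (n i))" .
  qed simp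
qed

lemma stepA:
  fixes q :: real and j :: nat and z s :: complex
  assumes q: "q > 1" and j: "0 < j"
    and zc: "norm z < 1 \<or> (norm z = 1 \<and> Re s > real j)"
  shows "(\<lambda>(N,(n,l)). ((-s) gchoose l) * z ^ sum n {..<j} * complex_of_real ((1/q)^Suc N) ^ Suc l
            * of_nat (sum n {..<j}) powr (-s - of_nat l))
         summable_on UNIV \<times> (PiE {..<j} (\<lambda>_. {1::nat..}) \<times> UNIV)"
proof -
  note of_nat_sum[simp del]
  define T where "T = PiE {..<j} (\<lambda>_. {1::nat..})"
  define u where "u N = (1/q)^Suc N" for N
  define v where "v n = norm z ^ sum n {..<j} * real (sum n {..<j}) powr (- Re s)" for n :: "nat \<Rightarrow> nat"
  define w where "w l = norm ((-s) gchoose l) * (1/q) ^ l" for l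
  have u0: "u N \<ge> 0" for N using q by (simp add: u_def)
  have v0: "v n \<ge> 0" for n by (simp add: v_def)
  have w0: "w l \<ge> 0" for l using q by (simp add: w_def)
  have su: "u summable_on UNIV"
  proof -
    have "summable (\<lambda>N. (1/q) ^ N)" using q by (intro summable_geometric) auto
    hence "summable u" unfolding u_def by (subst summable_Suc_iff[symmetric]) simp
    thus ?thesis using u0 by (subst summable_on_UNIV_nonneg_real_iff) auto
  qed
  have sv: "v summable_on T"
    unfolding v_def T_def using Li_summable[OF j, of z "Re s"] zc by simp
  have sw: "w summable_on UNIV"
  proof -
    have "summable w" unfolding w_def using q by (intro binom_abs_summable) auto
    thus ?thesis using w0 by (subst summable_on_UNIV_nonneg_real_iff) auto
  qed
  have "(\<lambda>(n,l). v n * w l) summable_on T \<times> UNIV"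
    by (rule prod_summable[OF sv sw v0 w0])
  hence "(\<lambda>(N,p). u N * (case p of (n,l) \<Rightarrow> v n * w l)) summable_on UNIV \<times> (T \<times> UNIV)"
    by (rule prod_summable[OF su _ u0]) (auto simp: v0 w0)
  hence bsum: "(\<lambda>(N,(n,l)). u N * (v n * w l)) summable_on UNIV \<times> (T \<times> UNIV)"
    by (simp add: case_prod_unfold)
  show ?thesis unfolding T_def[symmetric]
  proof (rule summable_on_iff_abs_summable_on_complex[THEN iffD2])
    show "(\<lambda>x. norm (case x of (N,(n,l)) \<Rightarrow> ((-s) gchoose l) * z ^ sum n {..<j} * complex_of_real ((1/q)^Suc N) ^ Suc l
            * of_nat (sum n {..<j}) powr (-s - of_nat l))) summable_on (UNIV::nat set) \<times> (T \<times> (UNIV::nat set))"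
    proof (rule summable_on_comparison_test[OF bsum])
      fix x assume "x \<in> (UNIV::nat set) \<times> (T \<times> (UNIV::nat set))"
      then obtain N n l where x: "x = (N,(n,l))" and n: "n \<in> T" by auto
      have sn: "real (sum n {..<j}) \<ge> 1"
      proof -
        have "n 0 \<le> sum n {..<j}" using j by (intro member_le_sum) auto
        moreover have "n 0 \<ge> 1" using n j by (auto simp: T_def)
        ultimately show ?thesis by (metis of_nat_1 of_nat_le_iff order_trans)
      qed
      have uq: "u N \<le> 1/q"
      proof -
        have "(1/q)^N \<le> 1" using q by (intro power_le_one) auto
        hence "(1/q) * (1/q)^N \<le> (1/q) * 1" using q by (intro mult_left_mono) auto
        thus ?thesis by (simp add: u_def)
      qed
      have "norm (complex_of_real (u N) ^ Suc l * of_nat (sum n {..<j}) powr (-s - of_nat l))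
           = u N ^ Suc l * real (sum n {..<j}) powr (- Re s - real l)"
        using u0[of N] by (simp add: norm_mult norm_power norm_powr_real_powr)
      also have "\<dots> \<le> (u N * (1/q)^l) * real (sum n {..<j}) powr (- Re s)"
      proof (intro mult_mono)
        show "u N ^ Suc l \<le> u N * (1/q)^l" using u0[of N] uq by (simp add: power_mono mult_left_mono)
        show "real (sum n {..<j}) powr (- Re s - real l) \<le> real (sum n {..<j}) powr (- Re s)"
          using sn by (intro powr_mono) auto
      qed (use u0 q in auto)
      finally have *: "norm (complex_of_real (u N) ^ Suc l * of_nat (sum n {..<j}) powr (-s - of_nat l))
           \<le> (u N * (1/q)^l) * real (sum n {..<j}) powr (- Re s)" .
      have "norm (((-s) gchoose l) * z ^ sum n {..<j} * complex_of_real (u N) ^ Suc l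
            * of_nat (sum n {..<j}) powr (-s - of_nat l))
         = norm ((-s) gchoose l) * norm z ^ sum n {..<j} *
           norm (complex_of_real (u N) ^ Suc l * of_nat (sum n {..<j}) powr (-s - of_nat l))"
        by (simp add: norm_mult norm_power mult_ac)
      also have "\<dots> \<le> norm ((-s) gchoose l) * norm z ^ sum n {..<j} *
           ((u N * (1/q)^l) * real (sum n {..<j}) powr (- Re s))"
        by (intro mult_left_mono[OF *]) auto
      also have "\<dots> = u N * (v n * w l)" by (simp add: v_def w_def mult_ac)
      finally show "norm (case x of (N,(n,l)) \<Rightarrow> ((-s) gchoose l) * z ^ sum n {..<j} * complex_of_real ((1/q)^Suc N) ^ Suc l
            * of_nat (sum n {..<j}) powr (-s - of_nat l)) \<le> (case x of (N,(n,l)) \<Rightarrow> u N * (v n * w l))"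
        using x by (simp add: u_def)
    qed auto
  qed
qed

theorem lemma3p1:
  fixes q :: real and k r :: nat and z s :: complex
  assumes "q > 1" and "0 < k" and "r < k" and "z \<noteq> 0"
    and "norm z < 1 \<or> (norm z = 1 \<and> Re s > real k)"
  shows "jackson_int q (\<lambda>a. mult_HL_zeta (k - r) z s (complex_of_real a + of_nat (k - r)))
       = z powi (- int (k - r)) *
         (\<Sum>l. ((- s) gchoose l) * mult_LL_zeta (k - r) z (s + of_nat l)
                / complex_of_real (q_num q (real l + 1)))"
proof -
  define j where "j = k - r"
  have j: "0 < j" using assms by (simp add: j_def)
  have zc: "norm z < 1 \<or> (norm z = 1 \<and> Re s > real j)" using assms(5) by (auto simp: j_def)
  define T where "T = PiE {..<j} (\<lambda>_. {1::nat..})"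
  define a where "a N = (1/q)^Suc N" for N
  define Fc where "Fc N n l = ((-s) gchoose l) * z ^ sum n {..<j} * complex_of_real (a N) ^ Suc l
            * of_nat (sum n {..<j}) powr (-s - of_nat l)" for N n l
  define D where "D = (UNIV::nat set) \<times> (T \<times> (UNIV::nat set))"
  have sumF: "(\<lambda>(N,(n,l)). Fc N n l) summable_on D"
    using stepA[OF assms(1) j zc] unfolding Fc_def a_def T_def D_def .
  have bij: "bij_betw (\<lambda>(l,(n,N)). (N,(n,l))) D D"
    by (rule bij_betwI[where g="\<lambda>(N,(n,l)). (l,(n,N))"]) (auto simp: D_def)
  have sumF': "(\<lambda>(l,(n,N)). Fc N n l) summable_on D"
  proof -
    have "(\<lambda>x. (\<lambda>(N,(n,l)). Fc N n l) ((\<lambda>(l,(n,N)). (N,(n,l))) x)) summable_on D"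
      using summable_on_reindex_bij_betw[OF bij] sumF by blast
    thus ?thesis by (simp add: case_prod_unfold)
  qed
  have reidx: "(\<Sum>\<^sub>\<infinity>(l,(n,N))\<in>D. Fc N n l) = (\<Sum>\<^sub>\<infinity>(N,(n,l))\<in>D. Fc N n l)"
  proof -
    have "(\<Sum>\<^sub>\<infinity>x\<in>D. (\<lambda>(N,(n,l)). Fc N n l) ((\<lambda>(l,(n,N)). (N,(n,l))) x)) = (\<Sum>\<^sub>\<infinity>(N,(n,l))\<in>D. Fc N n l)"
      by (rule infsum_reindex_bij_betw[OF bij])
    thus ?thesis by (simp add: case_prod_unfold)
  qed
  define tot where "tot = (\<Sum>\<^sub>\<infinity>(N,(n,l))\<in>D. Fc N n l)"
  have sF1: "(\<lambda>(n,l). Fc N n l) summable_on T \<times> UNIV" for N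
    using summable_on_SigmaD1[of "\<lambda>N (n,l). Fc N n l" UNIV "\<lambda>_. T \<times> UNIV" N] sumF unfolding D_def by simp
  have sF2: "(\<lambda>l. Fc N n l) summable_on UNIV" if "n \<in> T" for N n
    using summable_on_SigmaD1[of "\<lambda>n l. Fc N n l" T "\<lambda>_. UNIV" n] sF1[of N] that by simp
  have sF1': "(\<lambda>(n,N). Fc N n l) summable_on T \<times> UNIV" for l
    using summable_on_SigmaD1[of "\<lambda>l (n,N). Fc N n l" UNIV "\<lambda>_. T \<times> UNIV" l] sumF' unfolding D_def by simp
  have sF2': "(\<lambda>N. Fc N n l) summable_on UNIV" if "n \<in> T" for l n
    using summable_on_SigmaD1[of "\<lambda>n N. Fc N n l" T "\<lambda>_. UNIV" n] sF1'[of l] that by simp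

  define GL where "GL N = (\<Sum>\<^sub>\<infinity>n\<in>T. \<Sum>\<^sub>\<infinity>l. Fc N n l)" for N
  have GL_sums: "GL sums tot"
  proof -
    have eq: "GL N = (\<Sum>\<^sub>\<infinity>(n,l)\<in>T \<times> UNIV. Fc N n l)" for N
      unfolding GL_def using infsum_Sigma'_banach[of "\<lambda>n l. Fc N n l" T "\<lambda>_. UNIV"] sF1[of N] by simp
    have "(\<lambda>N. \<Sum>\<^sub>\<infinity>(n,l)\<in>T \<times> UNIV. Fc N n l) summable_on UNIV"
      using summable_on_Sigma_banach[of "\<lambda>N (n,l). Fc N n l" UNIV "\<lambda>_. T \<times> UNIV"] sumF unfolding D_def
      by (simp add: case_prod_unfold)
    moreover have "(\<Sum>\<^sub>\<infinity>N. \<Sum>\<^sub>\<infinity>(n,l)\<in>T \<times> UNIV. Fc N n l) = tot"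
      using infsum_Sigma'_banach[of "\<lambda>N (n,l). Fc N n l" UNIV "\<lambda>_. T \<times> UNIV"] sumF unfolding D_def tot_def
      by (simp add: case_prod_unfold)
    ultimately have "((\<lambda>N. \<Sum>\<^sub>\<infinity>(n,l)\<in>T \<times> UNIV. Fc N n l) has_sum tot) UNIV"
      using has_sum_infsum by metis
    hence "(\<lambda>N. \<Sum>\<^sub>\<infinity>(n,l)\<in>T \<times> UNIV. Fc N n l) sums tot" by (rule has_sum_imp_sums)
    moreover have "GL = (\<lambda>N. \<Sum>\<^sub>\<infinity>(n,l)\<in>T \<times> UNIV. Fc N n l)" using eq by (intro ext)
    ultimately show ?thesis by simp
  qed
  define GR where "GR l = (\<Sum>\<^sub>\<infinity>n\<in>T. \<Sum>\<^sub>\<infinity>N. Fc N n l)" for l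
  have GR_sums: "GR sums tot"
  proof -
    have eq: "GR l = (\<Sum>\<^sub>\<infinity>(n,N)\<in>T \<times> UNIV. Fc N n l)" for l
      unfolding GR_def using infsum_Sigma'_banach[of "\<lambda>n N. Fc N n l" T "\<lambda>_. UNIV"] sF1'[of l] by simp
    have "(\<lambda>l. \<Sum>\<^sub>\<infinity>(n,N)\<in>T \<times> UNIV. Fc N n l) summable_on UNIV"
      using summable_on_Sigma_banach[of "\<lambda>l (n,N). Fc N n l" UNIV "\<lambda>_. T \<times> UNIV"] sumF' unfolding D_def
      by (simp add: case_prod_unfold)
    moreover have "(\<Sum>\<^sub>\<infinity>l. \<Sum>\<^sub>\<infinity>(n,N)\<in>T \<times> UNIV. Fc N n l) = tot"
      using infsum_Sigma'_banach[of "\<lambda>l (n,N). Fc N n l" UNIV "\<lambda>_. T \<times> UNIV"] sumF' reidx unfolding D_def tot_def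
      by (simp add: case_prod_unfold)
    ultimately have "((\<lambda>l. \<Sum>\<^sub>\<infinity>(n,N)\<in>T \<times> UNIV. Fc N n l) has_sum tot) UNIV"
      using has_sum_infsum by metis
    hence "(\<lambda>l. \<Sum>\<^sub>\<infinity>(n,N)\<in>T \<times> UNIV. Fc N n l) sums tot" by (rule has_sum_imp_sums)
    moreover have "GR = (\<lambda>l. \<Sum>\<^sub>\<infinity>(n,N)\<in>T \<times> UNIV. Fc N n l)" using eq by (intro ext)
    ultimately show ?thesis by simp
  qed
  have B: "mult_HL_zeta j z s (complex_of_real (a N) + of_nat j) * complex_of_real (a N) = z powi (- int j) * GL N" for N
  proof -
    define x where "x = a N"
    have x0: "0 < x" using assms(1) by (simp add: x_def a_def)
    have x1: "x < 1" unfolding x_def a_def by (rule power_Suc_less_one) (use assms(1) in auto)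
    have snT: "real (sum n {..<j}) \<ge> 1" if "n \<in> T" for n
    proof -
      have "n 0 \<le> sum n {..<j}" using j by (intro member_le_sum) auto
      moreover have "n 0 \<ge> 1" using that j by (auto simp: T_def)
      ultimately show ?thesis by (metis of_nat_1 of_nat_le_iff order_trans)
    qed
    define H where "H n = z ^ sum n {..<j} * complex_of_real (x + real (sum n {..<j})) powr (-s)" for n :: "nat \<Rightarrow> nat"
    have B1: "(\<Sum>\<^sub>\<infinity>l. Fc N n l) = complex_of_real x * H n" if n: "n \<in> T" for n
    proof -
      have "\<bar>x\<bar> < \<bar>real (sum n {..<j})\<bar>" using snT[OF n] x0 x1 by simp
      from sums_mult[OF gen_binomial_complex'[OF this, of "-s"], of "complex_of_real x * z ^ sum n {..<j}"]
      have "(\<lambda>l. Fc N n l) sums (complex_of_real x * H n)"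
        by (simp add: Fc_def H_def x_def mult_ac)
      moreover have "(\<lambda>l. Fc N n l) sums (\<Sum>\<^sub>\<infinity>l. Fc N n l)"
        using has_sum_imp_sums[OF has_sum_infsum[OF sF2[OF n]]] .
      ultimately show ?thesis using sums_unique2 by metis
    qed
    define g where "g m = restrict (\<lambda>i. Suc (m i)) {..<j}" for m :: "nat \<Rightarrow> nat"
    have bijg: "bij_betw g (PiE {..<j} (\<lambda>_. UNIV)) T"
    proof (rule bij_betwI[where g="\<lambda>n. restrict (\<lambda>i. n i - 1) {..<j}"])
      show "g \<in> PiE {..<j} (\<lambda>_. UNIV) \<rightarrow> T" by (auto simp: g_def T_def)
      show "(\<lambda>n. restrict (\<lambda>i. n i - 1) {..<j}) \<in> T \<rightarrow> PiE {..<j} (\<lambda>_. UNIV)" by (auto simp: T_def)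
      show "restrict (\<lambda>i. g m i - 1) {..<j} = m" if "m \<in> PiE {..<j} (\<lambda>_. UNIV)" for m
        using that by (auto simp: g_def fun_eq_iff PiE_def extensional_def)
      show "g (restrict (\<lambda>i. n i - 1) {..<j}) = n" if "n \<in> T" for n
        using that by (fastforce simp: g_def fun_eq_iff PiE_def extensional_def T_def Pi_def)
    qed
    have sumg: "sum (g m) {..<j} = sum m {..<j} + j" for m
      by (simp add: g_def sum.distrib[symmetric] sum_Suc)
    have "mult_HL_zeta j z s (complex_of_real x + of_nat j)
        = (\<Sum>\<^sub>\<infinity>m\<in>PiE {..<j} (\<lambda>_. UNIV). z powi (- int j) * H (g m))"
      unfolding mult_HL_zeta_def
    proof (intro infsum_cong)
      fix m :: "nat \<Rightarrow> nat"
      have "H (g m) = z ^ (sum m {..<j} + j) * complex_of_real (x + real (sum m {..<j} + j)) powr (-s)"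
        by (simp add: H_def sumg)
      also have "complex_of_real (x + real (sum m {..<j} + j)) = of_nat (sum m {..<j}) + (complex_of_real x + of_nat j)"
        by simp
      finally have "z powi (- int j) * H (g m) = (z powi (- int j) * z ^ (sum m {..<j} + j)) *
            (of_nat (sum m {..<j}) + (complex_of_real x + of_nat j)) powr (-s)" by (simp add: mult_ac)
      also have "z powi (- int j) * z ^ (sum m {..<j} + j) = z ^ sum m {..<j}"
        using assms(4) by (simp add: power_add power_int_minus field_simps)
      finally show "z ^ sum m {..<j} / (of_nat (sum m {..<j}) + (complex_of_real x + of_nat j)) powr s
           = z powi (- int j) * H (g m)" by (simp add: powr_minus divide_inverse)
    qed
    also have "\<dots> = z powi (- int j) * (\<Sum>\<^sub>\<infinity>n\<in>T. H n)"
      by (subst infsum_cmult_right') (rule arg_cong[OF infsum_reindex_bij_betw[OF bijg]])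
    finally have "mult_HL_zeta j z s (complex_of_real x + of_nat j) * complex_of_real x
        = z powi (- int j) * ((\<Sum>\<^sub>\<infinity>n\<in>T. H n) * complex_of_real x)" by simp
    also have "(\<Sum>\<^sub>\<infinity>n\<in>T. H n) * complex_of_real x = GL N"
      unfolding GL_def infsum_cmult_left'[symmetric]
      by (intro infsum_cong) (simp add: B1 mult_ac)
    finally show ?thesis by (simp add: x_def)
  qed
  have C: "((- s) gchoose l) * mult_LL_zeta j z (s + of_nat l) / complex_of_real (q_num q (real l + 1))
          = complex_of_real (q - 1) * GR l" for l
  proof -
    define \<rho> where "\<rho> = (1/q)^Suc l"
    have \<rho>0: "0 < \<rho>" using assms(1) by (simp add: \<rho>_def)
    have \<rho>1: "\<rho> < 1" unfolding \<rho>_def by (rule power_Suc_less_one) (use assms(1) in auto)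
    define c where "c n = ((-s) gchoose l) * z ^ sum n {..<j} * of_nat (sum n {..<j}) powr (-s - of_nat l)" for n :: "nat \<Rightarrow> nat"
    have C1: "(\<Sum>\<^sub>\<infinity>N. Fc N n l) = c n * complex_of_real (\<rho> / (1 - \<rho>))" if n: "n \<in> T" for n
    proof -
      have "(\<lambda>N. \<rho> ^ N) sums (1 / (1 - \<rho>))" using \<rho>0 \<rho>1 by (intro geometric_sums) simp
      hence "(\<lambda>N. \<rho> * \<rho> ^ N) sums (\<rho> * (1 / (1 - \<rho>)))" by (rule sums_mult)
      hence "(\<lambda>N. complex_of_real (\<rho> * \<rho> ^ N)) sums complex_of_real (\<rho> / (1 - \<rho>))"
        by (intro sums_of_real) simp
      note S = sums_mult[OF this, of "c n"]
      have eq: "(\<lambda>N. c n * complex_of_real (\<rho> * \<rho> ^ N)) = (\<lambda>N. Fc N n l)"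
      proof (rule ext)
        fix N
        have "a N ^ Suc l = \<rho> ^ Suc N"
          unfolding a_def \<rho>_def power_mult[symmetric] by (simp only: mult.commute)
        hence "a N ^ Suc l = \<rho> * \<rho> ^ N" by simp
        hence "complex_of_real (a N) ^ Suc l = complex_of_real (\<rho> * \<rho> ^ N)"
          by (metis of_real_power)
        thus "c n * complex_of_real (\<rho> * \<rho> ^ N) = Fc N n l"
          by (simp add: Fc_def c_def mult_ac)
      qed
      from S have "(\<lambda>N. Fc N n l) sums (c n * complex_of_real (\<rho> / (1 - \<rho>)))" unfolding eq .
      moreover have "(\<lambda>N. Fc N n l) sums (\<Sum>\<^sub>\<infinity>N. Fc N n l)"
        using has_sum_imp_sums[OF has_sum_infsum[OF sF2'[OF n]]] .
      ultimately show ?thesis using sums_unique2 by metis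
    qed
    have qn: "complex_of_real (q - 1) * complex_of_real (\<rho> / (1 - \<rho>)) = 1 / complex_of_real (q_num q (real l + 1))"
    proof -
      have Q: "q powr (real l + 1) = q ^ Suc l" using assms(1) by (simp add: powr_realpow[symmetric] powr_add add.commute)
      have Q1: "q ^ Suc l > 1" using assms(1) by (intro one_less_power) auto
      have "(q - 1) * (\<rho> / (1 - \<rho>)) = 1 / q_num q (real l + 1)"
        unfolding q_num_def Q \<rho>_def using Q1 assms(1) by (simp add: field_simps power_one_over)
      thus ?thesis by (metis of_real_mult of_real_divide of_real_1)
    qed
    have Li: "mult_LL_zeta j z (s + of_nat l) = (\<Sum>\<^sub>\<infinity>n\<in>T. z ^ sum n {..<j} * of_nat (sum n {..<j}) powr (-s - of_nat l))"
      unfolding mult_LL_zeta_def T_def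
      by (intro infsum_cong) (simp add: powr_minus[symmetric] divide_inverse)
    have "complex_of_real (q - 1) * GR l = (\<Sum>\<^sub>\<infinity>n\<in>T. c n * (complex_of_real (q - 1) * complex_of_real (\<rho> / (1 - \<rho>))))"
    proof -
      have "complex_of_real (q - 1) * GR l = (\<Sum>\<^sub>\<infinity>n\<in>T. complex_of_real (q - 1) * (\<Sum>\<^sub>\<infinity>N. Fc N n l))"
        unfolding GR_def by (rule infsum_cmult_right'[symmetric])
      also have "\<dots> = (\<Sum>\<^sub>\<infinity>n\<in>T. c n * (complex_of_real (q - 1) * complex_of_real (\<rho> / (1 - \<rho>))))"
        by (intro infsum_cong) (simp only: C1 mult_ac)
      finally show ?thesis .
    qed
    also have "\<dots> = (\<Sum>\<^sub>\<infinity>n\<in>T. ((-s) gchoose l) * (z ^ sum n {..<j} * of_nat (sum n {..<j}) powr (-s - of_nat l)) / complex_of_real (q_num q (real l + 1)))"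
      unfolding qn by (intro infsum_cong) (simp add: c_def mult_ac)
    also have "\<dots> = ((- s) gchoose l) * mult_LL_zeta j z (s + of_nat l) / complex_of_real (q_num q (real l + 1))"
      unfolding Li infsum_cmult_right'[symmetric] divide_inverse infsum_cmult_left'[symmetric]
      by (simp add: mult_ac)
    finally show ?thesis by simp
  qed
  have qa: "q powr (- real (Suc N)) = a N" for N
    using assms(1) by (simp add: a_def powr_minus powr_realpow power_one_over field_simps del: of_nat_Suc)
  have L: "(\<lambda>N. mult_HL_zeta j z s (complex_of_real (q powr (- real (Suc N))) + of_nat j)
              * complex_of_real (q powr (- real (Suc N)))) sums (z powi (- int j) * tot)"
    unfolding qa B using sums_mult[OF GL_sums] .
  have R: "(\<lambda>l. ((- s) gchoose l) * mult_LL_zeta j z (s + of_nat l) / complex_of_real (q_num q (real l + 1)))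
           sums (complex_of_real (q - 1) * tot)"
    unfolding C using sums_mult[OF GR_sums] .
  show ?thesis
    unfolding j_def[symmetric] jackson_int_def using sums_unique[OF L, symmetric] sums_unique[OF R, symmetric]
    by (simp add: mult_ac)
qed

end
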